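(* Let $T,Z$ be random variables on finite sets with joint distribution $P_{TZ}=P_U$ on $\mathcal U=\mathcal T\times\mathcal Z$, let $W(y|x)$ be a channel from a finite set $\mathcal X$ to a finite set $\mathcal Y$, and $Q$ a distribution on $\mathcal X$. Let \[ E=\min_{\hat P_U}\min_{\hat P_{XY}} D(\hat P_U\|P_U)+D(\hat P_{XY}\|QW)+\Big[\min_{\tilde P_U\in\mathcal K_s(\hat P_U)}\min_{\tilde P_{XY}\in\mathcal K_c(\hat P_{XY})} D(\tilde P_{XY}\|Q\hat P_Y)-H(\tilde P_{T|Z})\Big]^+, \] where $\mathcal K_s(\hat P_U)=\{\tilde P_U:\tilde P_Z=\hat P_Z,\ \mathbb E_{\tilde P}\log P_U(U)\ge \mathbb E_{\hat P}\log P_U(U)\}$ and $\mathcal K_c(\hat P_{XY})=\{\tilde P_{XY}:\tilde P_Y=\hat P_Y,\ \mathbb E_{\tilde P}\log W(Y|X)\ge\mathbb E_{\hat P}\log W(Y|X)\}$. Then \[ E\ge \min_{\hat P_U}\min_{\hat P_{XY}} D(\hat P_U\|P_U)+D(\hat P_{XY}\|QW)+\Big[D(\hat P_{XY}\|Q\hat P_Y)-H(\hat P_{T|Z})\Big]^+. \]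
   Context: Minimizations over $\hat P_U$, $\tilde P_U$ range over distributions on $\mathcal U$ and over $\hat P_{XY},\tilde P_{XY}$ over distributions on $\mathcal X\times\mathcal Y$. $[x]^+=\max\{0,x\}$; $QW$ denotes $Q(x)W(y|x)$; $Q\hat P_Y$ denotes $Q(x)\hat P_Y(y)$ with $\hat P_Y$ the $Y$-marginal of $\hat P_{XY}$; $\hat P_Z$ is the $Z$-marginal; $H(\tilde P_{T|Z})$ is the conditional entropy of $T$ given $Z$ under $\tilde P_U$. *)

theory Defs
  imports "HOL-Analysis.Analysis"
begin

definition is_dist :: "('a::finite \<Rightarrow> real) \<Rightarrow> bool" where
  "is_dist P \<longleftrightarrow> (\<forall>a. 0 \<le> P a) \<and> (\<Sum>a\<in>UNIV. P a) = 1"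

definition KL :: "('a::finite \<Rightarrow> real) \<Rightarrow> ('a \<Rightarrow> real) \<Rightarrow> ereal" where
  "KL P R = (if \<exists>a. P a > 0 \<and> R a = 0 then \<infinity>
             else ereal (\<Sum>a\<in>UNIV. if P a = 0 then 0 else P a * ln (P a / R a)))"

definition Elog :: "('a::finite \<Rightarrow> real) \<Rightarrow> ('a \<Rightarrow> real) \<Rightarrow> ereal" where
  "Elog P f = (if \<exists>a. P a > 0 \<and> f a = 0 then -\<infinity>
               else ereal (\<Sum>a\<in>UNIV. if P a = 0 then 0 else P a * ln (f a)))"

definition margZ :: "('t::finite \<times> 'z \<Rightarrow> real) \<Rightarrow> 'z \<Rightarrow> real" where
  "margZ P z = (\<Sum>t\<in>UNIV. P (t, z))"

definition margY :: "('x::finite \<times> 'y \<Rightarrow> real) \<Rightarrow> 'y \<Rightarrow> real" where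
  "margY P y = (\<Sum>x\<in>UNIV. P (x, y))"

definition condH :: "('t::finite \<times> 'z::finite \<Rightarrow> real) \<Rightarrow> real" where
  "condH P = (\<Sum>u\<in>UNIV. if P u = 0 then 0 else - P u * ln (P u / margZ P (snd u)))"

definition joint :: "('x \<Rightarrow> real) \<Rightarrow> ('x \<Rightarrow> 'y \<Rightarrow> real) \<Rightarrow> 'x \<times> 'y \<Rightarrow> real" where
  "joint Q W u = Q (fst u) * W (fst u) (snd u)"

definition prodY :: "('x::finite \<Rightarrow> real) \<Rightarrow> ('x \<times> 'y \<Rightarrow> real) \<Rightarrow> 'x \<times> 'y \<Rightarrow> real" where
  "prodY Q P u = Q (fst u) * margY P (snd u)"

definition Ks :: "('t::finite \<times> 'z::finite \<Rightarrow> real) \<Rightarrow> ('t \<times> 'z \<Rightarrow> real) \<Rightarrow> ('t \<times> 'z \<Rightarrow> real) set" where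
  "Ks PU Ph = {Pt. is_dist Pt \<and> margZ Pt = margZ Ph \<and> Elog Pt PU \<ge> Elog Ph PU}"

definition Kc :: "('x::finite \<Rightarrow> 'y::finite \<Rightarrow> real) \<Rightarrow> ('x \<times> 'y \<Rightarrow> real) \<Rightarrow> ('x \<times> 'y \<Rightarrow> real) set" where
  "Kc W Ph = {Pt. is_dist Pt \<and> margY Pt = margY Ph
                  \<and> Elog Pt (\<lambda>u. W (fst u) (snd u)) \<ge> Elog Ph (\<lambda>u. W (fst u) (snd u))}"

definition pos_part :: "ereal \<Rightarrow> ereal" where
  "pos_part x = max 0 x"

end

theory Submission imports Defs begin

lemma swapZ: fixes P :: "'t::finite \<times> 'z::finite \<Rightarrow> real"
  shows "(\<Sum>u\<in>UNIV. P u * g (snd u)) = (\<Sum>z\<in>UNIV. margZ P z * g z)"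
  unfolding margZ_def sum_distrib_right
  by (subst sum.swap) (simp add: sum.cartesian_product case_prod_beta flip: UNIV_Times_UNIV)

lemma swapY: fixes P :: "'x::finite \<times> 'y::finite \<Rightarrow> real"
  shows "(\<Sum>u\<in>UNIV. P u * g (snd u)) = (\<Sum>z\<in>UNIV. margY P z * g z)"
  unfolding margY_def sum_distrib_right
  by (subst sum.swap) (simp add: sum.cartesian_product case_prod_beta flip: UNIV_Times_UNIV)

lemma ite0: "(if p = 0 then 0 else p * x) = p * (x::real)" by simp

lemma KL_fin: "\<not>(\<exists>a. P a > 0 \<and> R a = 0) \<Longrightarrow> KL P R = ereal (\<Sum>a\<in>UNIV. P a * ln (P a / R a))"
  unfolding KL_def by (simp only: ite0 if_False)

lemma KL_inf: "KL P R \<noteq> \<infinity> \<Longrightarrow> P a > 0 \<Longrightarrow> R a \<noteq> 0"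
  unfolding KL_def by (auto split: if_splits)

lemma KL_nminf: "KL P R \<noteq> -\<infinity>"
  unfolding KL_def by auto

lemma Elog_fin: "\<not>(\<exists>a. P a > 0 \<and> f a = 0) \<Longrightarrow> Elog P f = ereal (\<Sum>a\<in>UNIV. P a * ln (f a))"
  unfolding Elog_def by (simp only: ite0 if_False)

lemma Elog_inf: "Elog P f \<noteq> -\<infinity> \<Longrightarrow> P a > 0 \<Longrightarrow> f a \<noteq> 0"
  unfolding Elog_def by (auto split: if_splits)

lemma margZ_ge: assumes "is_dist P" shows "P (t, z) \<le> margZ P z"
  using assms unfolding margZ_def is_dist_def
  by (intro member_le_sum) auto

lemma margY_ge: assumes "is_dist P" shows "P (x, y) \<le> margY P y"
  using assms unfolding margY_def is_dist_def
  by (intro member_le_sum) auto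

lemma idU:
  fixes P PU :: "'t::finite \<times> 'z::finite \<Rightarrow> real"
  assumes "is_dist P" "\<forall>u. P u > 0 \<longrightarrow> PU u > 0"
  shows "(\<Sum>u\<in>UNIV. P u * ln (P u / PU u)) + condH P
       = (\<Sum>u\<in>UNIV. P u * ln (margZ P (snd u))) - (\<Sum>u\<in>UNIV. P u * ln (PU u))"
proof -
  have "P u * ln (P u / PU u) + (if P u = 0 then 0 else - P u * ln (P u / margZ P (snd u)))
      = P u * ln (margZ P (snd u)) - P u * ln (PU u)" for u
  proof (cases "P u = 0")
    case False
    have "P u \<ge> 0" using assms(1) unfolding is_dist_def by (cases u) auto
    with False have p: "P u > 0" by simp
    have m: "margZ P (snd u) > 0" using margZ_ge[OF assms(1), of "fst u" "snd u"] p by simp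
    have q: "PU u > 0" using assms(2) p by blast
    show ?thesis using p m q False by (simp add: ln_div algebra_simps)
  qed simp
  then show ?thesis unfolding condH_def
    by (simp add: sum.distrib[symmetric] sum_subtractf[symmetric])
qed

lemma idXY:
  fixes P :: "'x::finite \<times> 'y::finite \<Rightarrow> real"
  assumes "\<forall>u. P u \<ge> 0"
    "\<forall>u. P u > 0 \<longrightarrow> Q (fst u) > 0 \<and> W (fst u) (snd u) > 0 \<and> M (snd u) > 0"
  shows "(\<Sum>u\<in>UNIV. P u * ln (P u / joint Q W u)) - (\<Sum>u\<in>UNIV. P u * ln (P u / (Q (fst u) * M (snd u))))
       = (\<Sum>u\<in>UNIV. P u * ln (M (snd u))) - (\<Sum>u\<in>UNIV. P u * ln (W (fst u) (snd u)))"
proof -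
  have "P u * ln (P u / joint Q W u) - P u * ln (P u / (Q (fst u) * M (snd u)))
      = P u * ln (M (snd u)) - P u * ln (W (fst u) (snd u))" for u
  proof (cases "P u = 0")
    case False
    have "P u \<ge> 0" using assms(1) by blast
    with False have p: "P u > 0" by simp
    then have "Q (fst u) > 0" "W (fst u) (snd u) > 0" "M (snd u) > 0" using assms(2) by blast+
    then show ?thesis using p by (simp add: joint_def ln_div ln_mult algebra_simps)
  qed simp
  then show ?thesis by (simp add: sum_subtractf[symmetric])
qed

lemma core:
  fixes PU :: "'t::finite \<times> 'z::finite \<Rightarrow> real"
    and Q :: "'x::finite \<Rightarrow> real"
    and W :: "'x \<Rightarrow> 'y::finite \<Rightarrow> real"
  assumes dPU: "is_dist PU" and dQ: "is_dist Q" and dW: "\<forall>x. is_dist (W x)"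
    and dPh: "is_dist Ph" and dPxy: "is_dist Pxy"
    and Ks: "Pt \<in> Ks PU Ph" and Kc: "Ptxy \<in> Kc W Pxy"
    and lt: "KL Ptxy (prodY Q Pxy) - ereal (condH Pt) < KL Pxy (prodY Q Pxy) - ereal (condH Ph)"
    and fin: "KL Ph PU + KL Pxy (joint Q W) \<noteq> \<infinity>"
  shows "KL Pt PU + KL Ptxy (joint Q W) \<le> KL Ph PU + KL Pxy (joint Q W)"
proof -
  have nPU: "PU u \<ge> 0" for u using dPU unfolding is_dist_def by blast
  have nQ: "Q x \<ge> 0" for x using dQ unfolding is_dist_def by blast
  have nW: "W x y \<ge> 0" for x y using dW unfolding is_dist_def by blast
  have nPh: "Ph u \<ge> 0" for u using dPh unfolding is_dist_def by blast
  have nPxy: "Pxy u \<ge> 0" for u using dPxy unfolding is_dist_def by blast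
  from Ks have dPt: "is_dist Pt" and mZ: "margZ Pt = margZ Ph" and EU: "Elog Ph PU \<le> Elog Pt PU"
    unfolding Ks_def by auto
  from Kc have dPtxy: "is_dist Ptxy" and mY: "margY Ptxy = margY Pxy"
    and EW: "Elog Pxy (\<lambda>u. W (fst u) (snd u)) \<le> Elog Ptxy (\<lambda>u. W (fst u) (snd u))"
    unfolding Kc_def by auto
  have nPt: "Pt u \<ge> 0" for u using dPt unfolding is_dist_def by blast
  have nPtxy: "Ptxy u \<ge> 0" for u using dPtxy unfolding is_dist_def by blast
  have f1: "KL Ph PU \<noteq> \<infinity>" and f2: "KL Pxy (joint Q W) \<noteq> \<infinity>"
    using fin KL_nminf[of Ph PU] KL_nminf[of Pxy "joint Q W"] by auto
  have hPh: "Ph u > 0 \<Longrightarrow> PU u > 0" for u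
    using KL_inf[OF f1, of u] nPU[of u] by linarith
  have hPxy: "Pxy u > 0 \<Longrightarrow> Q (fst u) > 0 \<and> W (fst u) (snd u) > 0" for u
    using KL_inf[OF f2, of u] nQ[of "fst u"] nW[of "fst u" "snd u"]
    by (auto simp: joint_def less_le)
  have e1: "Elog Ph PU = ereal (\<Sum>u\<in>UNIV. Ph u * ln (PU u))"
    by (rule Elog_fin) (use hPh in force)
  then have "Elog Pt PU \<noteq> -\<infinity>" using EU by auto
  then have hPt: "Pt u > 0 \<Longrightarrow> PU u > 0" for u
    using Elog_inf[of Pt PU u] nPU[of u] by linarith
  have e2: "Elog Pt PU = ereal (\<Sum>u\<in>UNIV. Pt u * ln (PU u))"
    by (rule Elog_fin) (use hPt in force)
  have EU': "(\<Sum>u\<in>UNIV. Ph u * ln (PU u)) \<le> (\<Sum>u\<in>UNIV. Pt u * ln (PU u))"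
    using EU e1 e2 by simp
  have e3: "Elog Pxy (\<lambda>u. W (fst u) (snd u)) = ereal (\<Sum>u\<in>UNIV. Pxy u * ln (W (fst u) (snd u)))"
    by (rule Elog_fin) (use hPxy in force)
  then have "Elog Ptxy (\<lambda>u. W (fst u) (snd u)) \<noteq> -\<infinity>" using EW by auto
  then have hPtxyW: "Ptxy u > 0 \<Longrightarrow> W (fst u) (snd u) > 0" for u
    using Elog_inf[of Ptxy "\<lambda>u. W (fst u) (snd u)" u] nW[of "fst u" "snd u"] by force
  have e4: "Elog Ptxy (\<lambda>u. W (fst u) (snd u)) = ereal (\<Sum>u\<in>UNIV. Ptxy u * ln (W (fst u) (snd u)))"
    by (rule Elog_fin) (use hPtxyW in force)
  have EW': "(\<Sum>u\<in>UNIV. Pxy u * ln (W (fst u) (snd u))) \<le> (\<Sum>u\<in>UNIV. Ptxy u * ln (W (fst u) (snd u)))"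
    using EW e3 e4 by simp
  have f3: "KL Ptxy (prodY Q Pxy) \<noteq> \<infinity>"
  proof
    assume "KL Ptxy (prodY Q Pxy) = \<infinity>"
    then show False using lt by simp
  qed
  have mYpos: "margY Pxy y > 0" if "Ptxy (x, y) > 0" for x y
  proof -
    have "margY Ptxy y \<ge> Ptxy (x, y)" by (rule margY_ge[OF dPtxy])
    then show ?thesis using mY that by simp
  qed
  have hPtxy: "Ptxy u > 0 \<Longrightarrow> Q (fst u) > 0 \<and> W (fst u) (snd u) > 0 \<and> margY Pxy (snd u) > 0" for u
    using KL_inf[OF f3, of u] nQ[of "fst u"] hPtxyW[of u] mYpos[of "fst u" "snd u"]
    by (cases u) (auto simp: prodY_def less_le)
  have hPxy2: "Pxy u > 0 \<Longrightarrow> Q (fst u) > 0 \<and> W (fst u) (snd u) > 0 \<and> margY Pxy (snd u) > 0" for u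
    using hPxy[of u] margY_ge[OF dPxy, of "fst u" "snd u"] by auto
  have k1: "KL Ph PU = ereal (\<Sum>u\<in>UNIV. Ph u * ln (Ph u / PU u))"
    by (rule KL_fin) (use hPh in force)
  have k2: "KL Pt PU = ereal (\<Sum>u\<in>UNIV. Pt u * ln (Pt u / PU u))"
    by (rule KL_fin) (use hPt in force)
  have k3: "KL Pxy (joint Q W) = ereal (\<Sum>u\<in>UNIV. Pxy u * ln (Pxy u / joint Q W u))"
    by (rule KL_fin) (use hPxy in \<open>force simp: joint_def\<close>)
  have k4: "KL Ptxy (joint Q W) = ereal (\<Sum>u\<in>UNIV. Ptxy u * ln (Ptxy u / joint Q W u))"
    by (rule KL_fin) (use hPtxy in \<open>force simp: joint_def\<close>)
  have k5: "KL Pxy (prodY Q Pxy) = ereal (\<Sum>u\<in>UNIV. Pxy u * ln (Pxy u / (Q (fst u) * margY Pxy (snd u))))"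
    unfolding prodY_def by (rule KL_fin) (use hPxy2 in force)
  have k6: "KL Ptxy (prodY Q Pxy) = ereal (\<Sum>u\<in>UNIV. Ptxy u * ln (Ptxy u / (Q (fst u) * margY Pxy (snd u))))"
    unfolding prodY_def by (rule KL_fin) (use hPtxy in force)
  have iU1: "(\<Sum>u\<in>UNIV. Ph u * ln (Ph u / PU u)) + condH Ph
       = (\<Sum>u\<in>UNIV. Ph u * ln (margZ Ph (snd u))) - (\<Sum>u\<in>UNIV. Ph u * ln (PU u))"
    by (rule idU[OF dPh]) (use hPh in blast)
  have iU2: "(\<Sum>u\<in>UNIV. Pt u * ln (Pt u / PU u)) + condH Pt
       = (\<Sum>u\<in>UNIV. Pt u * ln (margZ Pt (snd u))) - (\<Sum>u\<in>UNIV. Pt u * ln (PU u))"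
    by (rule idU[OF dPt]) (use hPt in blast)
  have sZ: "(\<Sum>u\<in>UNIV. Pt u * ln (margZ Pt (snd u))) = (\<Sum>u\<in>UNIV. Ph u * ln (margZ Ph (snd u)))"
    using swapZ[of Pt "\<lambda>z. ln (margZ Pt z)"] swapZ[of Ph "\<lambda>z. ln (margZ Ph z)"] mZ by simp
  have iX1: "(\<Sum>u\<in>UNIV. Pxy u * ln (Pxy u / joint Q W u)) - (\<Sum>u\<in>UNIV. Pxy u * ln (Pxy u / (Q (fst u) * margY Pxy (snd u))))
       = (\<Sum>u\<in>UNIV. Pxy u * ln (margY Pxy (snd u))) - (\<Sum>u\<in>UNIV. Pxy u * ln (W (fst u) (snd u)))"
    by (rule idXY) (use nPxy hPxy2 in blast)+
  have iX2: "(\<Sum>u\<in>UNIV. Ptxy u * ln (Ptxy u / joint Q W u)) - (\<Sum>u\<in>UNIV. Ptxy u * ln (Ptxy u / (Q (fst u) * margY Pxy (snd u))))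
       = (\<Sum>u\<in>UNIV. Ptxy u * ln (margY Pxy (snd u))) - (\<Sum>u\<in>UNIV. Ptxy u * ln (W (fst u) (snd u)))"
    by (rule idXY) (use nPtxy hPtxy in blast)+
  have sY: "(\<Sum>u\<in>UNIV. Ptxy u * ln (margY Pxy (snd u))) = (\<Sum>u\<in>UNIV. Pxy u * ln (margY Pxy (snd u)))"
    using swapY[of Ptxy "\<lambda>z. ln (margY Pxy z)"] swapY[of Pxy "\<lambda>z. ln (margY Pxy z)"] mY by simp
  have ltr: "(\<Sum>u\<in>UNIV. Ptxy u * ln (Ptxy u / (Q (fst u) * margY Pxy (snd u)))) - condH Pt
     < (\<Sum>u\<in>UNIV. Pxy u * ln (Pxy u / (Q (fst u) * margY Pxy (snd u)))) - condH Ph"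
    using lt unfolding k5 k6 by simp
  show ?thesis unfolding k1 k2 k3 k4
    using iU1 iU2 sZ iX1 iX2 sY ltr EU' EW' by simp
qed

lemma pos_part_ge0: "0 \<le> pos_part x" unfolding pos_part_def by simp

theorem lemma4:
  fixes PU :: "'t::finite \<times> 'z::finite \<Rightarrow> real"
    and Q :: "'x::finite \<Rightarrow> real"
    and W :: "'x \<Rightarrow> 'y::finite \<Rightarrow> real"
  assumes "is_dist PU" and "is_dist Q" and "\<forall>x. is_dist (W x)"
  shows "(INF Ph\<in>{P. is_dist P}. INF Pxy\<in>{P. is_dist P}.
            KL Ph PU + KL Pxy (joint Q W) +
            pos_part (INF Pt\<in>Ks PU Ph. INF Ptxy\<in>Kc W Pxy.
                        KL Ptxy (prodY Q Pxy) - ereal (condH Pt)))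
       \<ge> (INF Ph\<in>{P. is_dist P}. INF Pxy\<in>{P. is_dist P}.
            KL Ph PU + KL Pxy (joint Q W) +
            pos_part (KL Pxy (prodY Q Pxy) - ereal (condH Ph)))"
proof -
  define F where "F = (\<lambda>Ph Pxy. KL Ph PU + KL Pxy (joint Q W) + pos_part (KL Pxy (prodY Q Pxy) - ereal (condH Ph)))"
  define R where "R = (INF Ph\<in>{P. is_dist P}. INF Pxy\<in>{P. is_dist P}. F Ph Pxy)"
  have Rle: "R \<le> F Ph Pxy" if "is_dist Ph" "is_dist Pxy" for Ph Pxy
    unfolding R_def using that by (meson INF_lower2 INF_lower mem_Collect_eq)
  have key: "R \<le> KL Ph PU + KL Pxy (joint Q W) + pos_part (KL Ptxy (prodY Q Pxy) - ereal (condH Pt))"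
    if h: "is_dist Ph" "is_dist Pxy" "Pt \<in> Ks PU Ph" "Ptxy \<in> Kc W Pxy" for Ph Pxy Pt Ptxy
  proof -
    have "margY Ptxy = margY Pxy" using h(4) unfolding Kc_def by auto
    then have pe: "prodY Q Ptxy = prodY Q Pxy" unfolding prodY_def by simp
    have dt: "is_dist Pt" "is_dist Ptxy" using h(3,4) unfolding Ks_def Kc_def by auto
    have R1: "R \<le> F Ph Pxy" using Rle h by auto
    have R2: "R \<le> KL Pt PU + KL Ptxy (joint Q W) + pos_part (KL Ptxy (prodY Q Pxy) - ereal (condH Pt))"
      using Rle[OF dt] pe unfolding F_def by simp
    show ?thesis
    proof (cases "KL Pxy (prodY Q Pxy) - ereal (condH Ph) \<le> KL Ptxy (prodY Q Pxy) - ereal (condH Pt)")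
      case True
      then have "pos_part (KL Pxy (prodY Q Pxy) - ereal (condH Ph)) \<le> pos_part (KL Ptxy (prodY Q Pxy) - ereal (condH Pt))"
        unfolding pos_part_def by (intro max.mono) simp_all
      then show ?thesis using R1 unfolding F_def by (meson add_left_mono order_trans)
    next
      case False
      show ?thesis
      proof (cases "KL Ph PU + KL Pxy (joint Q W) = \<infinity>")
        case True
        have p: "0 \<le> pos_part (KL Ptxy (prodY Q Pxy) - ereal (condH Pt))" by (rule pos_part_ge0)
        show ?thesis by (subst True) (use p in auto)
      next
        case fin: False
        have "KL Pt PU + KL Ptxy (joint Q W) \<le> KL Ph PU + KL Pxy (joint Q W)"
          by (rule core[OF assms h]) (use False fin in auto)
        then show ?thesis using R2 by (meson add_right_mono order_trans)
      qed
    qed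
  qed
  have main: "R \<le> KL Ph PU + KL Pxy (joint Q W) + pos_part (INF Pt\<in>Ks PU Ph. INF Ptxy\<in>Kc W Pxy.
                        KL Ptxy (prodY Q Pxy) - ereal (condH Pt))"
    if h: "is_dist Ph" "is_dist Pxy" for Ph Pxy
  proof -
    define I where "I = (INF Pt\<in>Ks PU Ph. INF Ptxy\<in>Kc W Pxy. KL Ptxy (prodY Q Pxy) - ereal (condH Pt))"
    define c where "c = KL Ph PU + KL Pxy (joint Q W)"
    have cn: "c \<noteq> -\<infinity>" unfolding c_def using KL_nminf[of Ph PU] KL_nminf[of Pxy "joint Q W"] by auto
    have kk: "R \<le> c + pos_part a" if "a \<in> {KL Ptxy (prodY Q Pxy) - ereal (condH Pt) | Pt Ptxy. Pt \<in> Ks PU Ph \<and> Ptxy \<in> Kc W Pxy}" for a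
      using that key[OF h] unfolding c_def by auto
    have "R \<le> c + pos_part I"
    proof (cases "c = \<infinity>")
      case True
      then show ?thesis using pos_part_ge0[of I] by auto
    next
      case False
      then obtain r where r: "c = ereal r" using cn by (cases c) auto
      show ?thesis
      proof (cases "R \<le> c")
        case True
        then show ?thesis using pos_part_ge0[of I] by (meson add_increasing2 order_trans)
      next
        case gt: False
        have "R - c \<le> I" unfolding I_def
        proof (intro INF_greatest)
          fix Pt Ptxy assume "Pt \<in> Ks PU Ph" "Ptxy \<in> Kc W Pxy"
          then have "R \<le> c + pos_part (KL Ptxy (prodY Q Pxy) - ereal (condH Pt))"
            using kk by blast
          then show "R - c \<le> KL Ptxy (prodY Q Pxy) - ereal (condH Pt)"
            using gt r unfolding pos_part_def
            by (cases R; cases "KL Ptxy (prodY Q Pxy) - ereal (condH Pt)") (auto simp: max_def split: if_splits)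
        qed
        then have "R \<le> c + I" using r by (cases R; cases I) auto
        also have "\<dots> \<le> c + pos_part I" unfolding pos_part_def by (intro add_left_mono) simp
        finally show ?thesis .
      qed
    qed
    then show ?thesis unfolding I_def c_def .
  qed
  have "R \<le> (INF Ph\<in>{P. is_dist P}. INF Pxy\<in>{P. is_dist P}.
            KL Ph PU + KL Pxy (joint Q W) +
            pos_part (INF Pt\<in>Ks PU Ph. INF Ptxy\<in>Kc W Pxy.
                        KL Ptxy (prodY Q Pxy) - ereal (condH Pt)))"
    by (intro INF_greatest) (use main in auto)
  then show ?thesis unfolding R_def F_def by simp
qed

end
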